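(* Let $C\subseteq\mathbb{F}_q^n$ be a constant weight linear code of dimension $k$, and let $0\leqslant i\leqslant k$. Then \[ N_i=\{\mathrm{Supp}(C') : C' \text{ is a subcode of } C \text{ of dimension } i\}. \]
   Context: A subcode is a linear subspace; $\mathrm{Supp}(D)=\{x: \exists d\in D,\ d_x\neq0\}$. A constant weight code is a linear code all of whose non-zero codewords have the same number of non-zero coordinates. Let $H_C$ be a parity check matrix of $C$ ($c\in C$ iff $cH_C^t=0$); the associated matroid has ground set $E=\{1,\dots,n\}$ and independent sets the subsets indexing linearly independent columns of $H_C$; $\mathrm{rank}(\sigma)$ is the maximal size of an independent subset of $\sigma$. $N_i$ denotes the set of inclusion-minimal subsets $\sigma\subseteq E$ with $\#\sigma-\mathrm{rank}(\sigma)=i$. *)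

theory Defs
  imports "HOL-Analysis.Analysis"
begin

text \<open>Vectors of the ambient space F_q^n are elements of 'a^'n with 'a a finite field and
  the coordinate index set E = UNIV :: 'n set (finite, n = CARD('n)).
  A parity check matrix H :: 'a^'n^'m satisfies: c in C iff H *v c = 0 (i.e. c H^t = 0).\<close>

definition Supp :: "('a::zero ^ 'n) set \<Rightarrow> 'n set" where
  "Supp D = {x. \<exists>d\<in>D. d $ x \<noteq> 0}"

definition wt :: "'a::zero ^ 'n \<Rightarrow> nat" where
  "wt c = card {x. c $ x \<noteq> 0}"

definition constant_weight :: "('a::zero ^ 'n) set \<Rightarrow> bool" where
  "constant_weight C \<longleftrightarrow> (\<forall>c\<in>C. \<forall>d\<in>C. c \<noteq> 0 \<longrightarrow> d \<noteq> 0 \<longrightarrow> wt c = wt d)"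

text \<open>Independent sets of the matroid of H: sets of column indices whose columns are
  linearly independent (as a family, so repeated columns count as dependent).\<close>
definition mindep :: "'a::field ^ 'n ^ 'm \<Rightarrow> 'n set \<Rightarrow> bool" where
  "mindep H \<tau> \<longleftrightarrow> inj_on (\<lambda>j. column j H) \<tau> \<and> vec.independent ((\<lambda>j. column j H) ` \<tau>)"

definition mrank :: "'a::field ^ 'n ^ 'm \<Rightarrow> 'n set \<Rightarrow> nat" where
  "mrank H \<sigma> = Max {card \<tau> | \<tau>. \<tau> \<subseteq> \<sigma> \<and> mindep H \<tau>}"

definition nullity :: "'a::field ^ 'n ^ 'm \<Rightarrow> 'n set \<Rightarrow> nat" where
  "nullity H \<sigma> = card \<sigma> - mrank H \<sigma>"

definition N :: "'a::field ^ 'n ^ 'm \<Rightarrow> nat \<Rightarrow> 'n set set" where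
  "N H i = {\<sigma>. nullity H \<sigma> = i \<and> (\<forall>\<tau>. \<tau> \<subset> \<sigma> \<longrightarrow> nullity H \<tau> \<noteq> i)}"

end

theory Submission
  imports Defs
begin


lemma rank_nullity_vec:
  fixes H :: "'a::field ^ 'n ^ 'm" and V :: "('a ^ 'n) set"
  assumes V: "vec.subspace V"
  shows "vec.dim V = vec.dim {x\<in>V. H *v x = 0} + vec.dim ((\<lambda>x. H *v x) ` V)"
proof -
  define K where "K = {x\<in>V. H *v x = 0}"
  have Ksub: "vec.subspace K"
    unfolding K_def using V
    by (auto simp: vec.subspace_def matrix_vector_right_distrib vec.scale)
  have KV: "K \<subseteq> V" by (auto simp: K_def)
  obtain BK where BK: "BK \<subseteq> K" "vec.independent BK" "K \<subseteq> vec.span BK" "card BK = vec.dim K"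
    using vec.basis_exists[of K] by blast
  obtain B where B: "BK \<subseteq> B" "B \<subseteq> V" "vec.independent B" "V \<subseteq> vec.span B"
    using vec.maximal_independent_subset_extend[of BK V] BK KV by blast
  have finB: "finite B" using B(3) vec.independent_bound_general by blast
  have spanB: "vec.span B = V" using B V by (simp add: vec.span_subspace)
  have dimV: "vec.dim V = card B"
    by (metis vec.dim_eq_card B(3) spanB V vec.span_eq_iff)
  define W where "W = vec.span (B - BK)"
  have Wsub: "vec.subspace W" by (simp add: W_def)
  have WV: "W \<subseteq> V" unfolding W_def using B V by (meson Diff_subset order_trans vec.span_minimal)
  have dimW: "vec.dim W \<le> card B - card BK"
  proof -
    have "vec.dim W \<le> card (B - BK)"
      unfolding W_def vec.dim_span by (rule vec.dim_le_card) (auto simp: finB vec.span_superset)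
    also have "\<dots> = card B - card BK" using finB B(1) by (simp add: card_Diff_subset finite_subset)
    finally show ?thesis .
  qed
  have spanBK: "vec.span BK = K" using BK Ksub by (simp add: vec.span_subspace)
  define S where "S = {x + y |x y. x \<in> K \<and> y \<in> W}"
  have SV: "S = V"
  proof
    show "S \<subseteq> V" unfolding S_def using KV WV V by (auto intro: vec.subspace_add)
    have "V \<subseteq> vec.span (BK \<union> (B - BK))" using B by (simp add: Un_absorb1 Un_Diff_cancel)
    then show "V \<subseteq> S" unfolding S_def vec.span_Un spanBK W_def by blast
  qed
  have sumint: "vec.dim S + vec.dim (K \<inter> W) = vec.dim K + vec.dim W"
    unfolding S_def by (rule vec.dim_sums_Int[OF Ksub Wsub])
  have cBK: "card BK \<le> card B" using finB B(1) by (rule card_mono)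
  have KW0: "vec.dim (K \<inter> W) = 0" using sumint[unfolded SV] dimV dimW BK(4) cBK by linarith
  have inj: "inj_on (\<lambda>x. H *v x) (vec.span W)"
  proof (rule inj_onI)
    fix x y assume x: "x \<in> vec.span W" and y: "y \<in> vec.span W" and e: "H *v x = H *v y"
    have xy: "x - y \<in> W" using x y Wsub by (metis vec.span_eq_iff vec.subspace_diff)
    have "H *v (x - y) = 0" using e by (simp add: matrix_vector_mult_diff_distrib)
    then have "x - y \<in> K \<inter> W" using xy WV by (auto simp: K_def)
    show "x = y"
    proof (rule ccontr)
      assume "x \<noteq> y"
      then have "vec.independent {x - y}" by simp
      then have "card {x - y} \<le> vec.dim (K \<inter> W)"
        using \<open>x - y \<in> K \<inter> W\<close> by (intro vec.independent_card_le_dim) auto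
      then show False using KW0 by simp
    qed
  qed
  have dimfW: "vec.dim ((\<lambda>x. H *v x) ` W) = vec.dim W"
    by (rule vec.dim_image_eq[OF matrix_vector_mul_linear_gen inj])
  have img: "(\<lambda>x. H *v x) ` V = (\<lambda>x. H *v x) ` W"
  proof
    show "(\<lambda>x. H *v x) ` W \<subseteq> (\<lambda>x. H *v x) ` V" using WV by blast
    show "(\<lambda>x. H *v x) ` V \<subseteq> (\<lambda>x. H *v x) ` W"
    proof
      fix z assume "z \<in> (\<lambda>x. H *v x) ` V"
      then obtain v where v: "v \<in> V" "z = H *v v" by blast
      then obtain a b where ab: "v = a + b" "a \<in> K" "b \<in> W" using SV unfolding S_def by blast
      have "z = H *v b" using v ab by (simp add: K_def matrix_vector_right_distrib)
      then show "z \<in> (\<lambda>x. H *v x) ` W" using ab by blast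
    qed
  qed
  have "vec.dim V = vec.dim K + vec.dim W" using sumint[unfolded SV] KW0 by linarith
  moreover have "vec.dim ((\<lambda>x. H *v x) ` V) = vec.dim W" using dimfW img by (simp only:)
  ultimately show ?thesis by (simp only: K_def)
qed



lemma coord_split:
  fixes D :: "('a::{field,finite} ^ 'n) set"
  assumes D: "vec.subspace D" and x: "x \<in> Supp D"
  shows "card D = CARD('a) * card {d\<in>D. d $ x = 0}"
proof -
  obtain d0 where d0: "d0 \<in> D" "d0 $ x \<noteq> 0" using x by (auto simp: Supp_def)
  define e where "e = inverse (d0 $ x) *s d0"
  have eD: "e \<in> D" unfolding e_def using D d0 by (simp add: vec.subspace_scale)
  have ex: "e $ x = 1" using d0 by (simp add: e_def)
  define F where "F = (\<lambda>(t::'a, y::'a^'n). y + t *s e)"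
  have "bij_betw F ((UNIV::'a set) \<times> {d\<in>D. d $ x = 0}) D"
  proof (rule bij_betwI')
    fix p p' assume p: "p \<in> (UNIV::'a set) \<times> {d\<in>D. d $ x = 0}" and p': "p' \<in> (UNIV::'a set) \<times> {d\<in>D. d $ x = 0}"
    obtain t y where ty: "p = (t, y)" by (cases p)
    obtain t' y' where ty': "p' = (t', y')" by (cases p')
    show "(F p = F p') = (p = p')"
    proof
      assume eq: "F p = F p'"
      then have "(y + t *s e) $ x = (y' + t' *s e) $ x" by (simp add: F_def ty ty')
      then have "t = t'" using p p' ty ty' ex by simp
      then show "p = p'" using eq ty ty' by (simp add: F_def)
    qed simp
  next
    fix p assume p: "p \<in> (UNIV::'a set) \<times> {d\<in>D. d $ x = 0}"
    obtain t y where ty: "p = (t, y)" by (cases p)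
    show "F p \<in> D" using p ty D eD by (simp add: F_def vec.subspace_add vec.subspace_scale)
  next
    fix d assume d: "d \<in> D"
    have "d - (d $ x) *s e \<in> D" using d eD D by (simp add: vec.subspace_diff vec.subspace_scale)
    moreover have "(d - (d $ x) *s e) $ x = 0" using ex by simp
    moreover have "F (d $ x, d - (d $ x) *s e) = d" by (simp add: F_def)
    ultimately show "\<exists>p\<in>(UNIV::'a set) \<times> {d\<in>D. d $ x = 0}. d = F p"
      by (intro bexI[of _ "(d $ x, d - (d $ x) *s e)"]) auto
  qed
  then have "card D = card ((UNIV::'a set) \<times> {d\<in>D. d $ x = 0})" by (simp add: bij_betw_same_card)
  then show ?thesis by (simp add: card_cartesian_product)
qed

lemma wt_sum_formula:
  fixes D :: "('a::{field,finite} ^ 'n::finite) set"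
  assumes D: "vec.subspace D" and w: "\<And>d. d \<in> D \<Longrightarrow> d \<noteq> 0 \<Longrightarrow> wt d = w"
  shows "CARD('a) * ((card D - 1) * w) = card (Supp D) * ((CARD('a) - 1) * card D)"
proof -
  let ?q = "CARD('a)"
  have finD: "finite D" by simp
  have z: "0 \<in> D" using D by (simp add: vec.subspace_0)
  have "(\<Sum>d\<in>D. wt d) = (\<Sum>d\<in>D - {0}. wt d)"
    using z by (intro sum.mono_neutral_right) (auto simp: wt_def)
  also have "\<dots> = (card D - 1) * w" using w z by (simp add: card_Diff_singleton)
  finally have s1: "(\<Sum>d\<in>D. wt d) = (card D - 1) * w" .
  have "(\<Sum>d\<in>D. wt d) = (\<Sum>d\<in>D. \<Sum>j\<in>UNIV. if d $ j \<noteq> 0 then 1 else 0)"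
    by (simp add: wt_def sum.If_cases Int_def)
  also have "\<dots> = (\<Sum>j\<in>UNIV. \<Sum>d\<in>D. if d $ j \<noteq> 0 then 1 else 0)" by (rule sum.swap)
  also have "\<dots> = (\<Sum>j\<in>UNIV. card {d\<in>D. d $ j \<noteq> 0})"
    by (simp add: sum.If_cases Int_def)
  also have "\<dots> = (\<Sum>j\<in>Supp D. card {d\<in>D. d $ j \<noteq> 0})"
    by (intro sum.mono_neutral_right) (auto simp: Supp_def)
  finally have s2: "(\<Sum>d\<in>D. wt d) = (\<Sum>j\<in>Supp D. card {d\<in>D. d $ j \<noteq> 0})" .
  have each: "?q * card {d\<in>D. d $ j \<noteq> 0} = (?q - 1) * card D" if j: "j \<in> Supp D" for j
  proof -
    have split: "card D = card {d\<in>D. d $ j \<noteq> 0} + card {d\<in>D. d $ j = 0}"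
      by (subst card_Un_disjoint[symmetric]) (auto intro: arg_cong[where f=card])
    have cs: "card D = ?q * card {d\<in>D. d $ j = 0}" by (rule coord_split[OF D j])
    show ?thesis using split cs by (simp add: algebra_simps diff_mult_distrib)
  qed
  have "?q * (\<Sum>d\<in>D. wt d) = (\<Sum>j\<in>Supp D. ?q * card {d\<in>D. d $ j \<noteq> 0})"
    by (simp add: s2 sum_distrib_left)
  also have "\<dots> = (\<Sum>j\<in>Supp D. (?q - 1) * card D)" using each by simp
  also have "\<dots> = card (Supp D) * ((?q - 1) * card D)" by simp
  finally show ?thesis using s1 by simp
qed



definition Vs :: "'n set \<Rightarrow> ('a::zero ^ 'n) set" where
  "Vs \<sigma> = {x. \<forall>i. i \<notin> \<sigma> \<longrightarrow> x $ i = 0}"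

lemma Vs_subspace: "vec.subspace (Vs \<sigma> :: ('a::field ^ 'n) set)"
  by (auto simp: vec.subspace_def Vs_def)

lemma mult_axis: "(H :: 'a::field ^ 'n ^ 'm) *v axis j 1 = column j H"
proof -
  have "\<And>i. (axis j 1 :: 'a^'n) $ i *s column i H = (if i = j then column i H else 0)"
    by (simp add: axis_def)
  then show ?thesis by (simp add: matrix_mult_sum)
qed

lemma img_span:
  fixes H :: "'a::field ^ 'n ^ 'm"
  shows "(\<lambda>x. H *v x) ` Vs \<sigma> = vec.span ((\<lambda>j. column j H) ` \<sigma>)"
proof
  show "(\<lambda>x. H *v x) ` Vs \<sigma> \<subseteq> vec.span ((\<lambda>j. column j H) ` \<sigma>)"
  proof
    fix z assume "z \<in> (\<lambda>x. H *v x) ` Vs \<sigma>"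
    then obtain x where x: "x \<in> Vs \<sigma>" "z = H *v x" by blast
    have "z = (\<Sum>i\<in>UNIV. x$i *s column i H)" using x by (simp add: matrix_mult_sum)
    also have "\<dots> = (\<Sum>i\<in>\<sigma>. x$i *s column i H)"
      using x(1) by (intro sum.mono_neutral_right) (auto simp: Vs_def)
    also have "\<dots> \<in> vec.span ((\<lambda>j. column j H) ` \<sigma>)"
      by (intro vec.span_sum vec.span_scale vec.span_base) auto
    finally show "z \<in> vec.span ((\<lambda>j. column j H) ` \<sigma>)" .
  qed
  show "vec.span ((\<lambda>j. column j H) ` \<sigma>) \<subseteq> (\<lambda>x. H *v x) ` Vs \<sigma>"
  proof (rule vec.span_minimal)
    show "vec.subspace ((\<lambda>x. H *v x) ` Vs \<sigma>)"
      by (rule vec.subspace_image[OF Vs_subspace])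
    show "(\<lambda>j. column j H) ` \<sigma> \<subseteq> (\<lambda>x. H *v x) ` Vs \<sigma>"
    proof
      fix z assume "z \<in> (\<lambda>j. column j H) ` \<sigma>"
      then obtain j where "j \<in> \<sigma>" "z = column j H" by blast
      moreover have "axis j 1 \<in> Vs \<sigma>" using \<open>j \<in> \<sigma>\<close> by (auto simp: Vs_def axis_def)
      ultimately show "z \<in> (\<lambda>x. H *v x) ` Vs \<sigma>" using mult_axis[of H j] by (metis image_eqI)
    qed
  qed
qed

lemma mrank_dim:
  fixes H :: "'a::field ^ 'n::finite ^ 'm"
  shows "mrank H \<sigma> = vec.dim ((\<lambda>j. column j H) ` \<sigma>)"
  unfolding mrank_def
proof (rule Max_eqI)
  let ?c = "\<lambda>j. column j H"
  show "finite {card \<tau> |\<tau>. \<tau> \<subseteq> \<sigma> \<and> mindep H \<tau>}"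
  proof (rule finite_subset[of _ "card ` Pow \<sigma>"])
    show "{card \<tau> |\<tau>. \<tau> \<subseteq> \<sigma> \<and> mindep H \<tau>} \<subseteq> card ` Pow \<sigma>" by blast
  qed simp
  show "y \<le> vec.dim (?c ` \<sigma>)" if "y \<in> {card \<tau> |\<tau>. \<tau> \<subseteq> \<sigma> \<and> mindep H \<tau>}" for y
  proof -
    from that obtain \<tau> where t: "y = card \<tau>" "\<tau> \<subseteq> \<sigma>" "mindep H \<tau>" by blast
    have "y = card (?c ` \<tau>)" using t by (simp add: mindep_def card_image)
    also have "\<dots> \<le> vec.dim (?c ` \<sigma>)"
      using t unfolding mindep_def by (intro vec.independent_card_le_dim) blast+
    finally show ?thesis .
  qed
  obtain B where B: "B \<subseteq> ?c ` \<sigma>" "vec.independent B" "?c ` \<sigma> \<subseteq> vec.span B" "card B = vec.dim (?c ` \<sigma>)"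
    using vec.basis_exists[of "?c ` \<sigma>"] by blast
  define g where "g b = (SOME j. j \<in> \<sigma> \<and> ?c j = b)" for b
  have g: "g b \<in> \<sigma> \<and> ?c (g b) = b" if "b \<in> B" for b
  proof -
    have "\<exists>j. j \<in> \<sigma> \<and> column j H = b" using B(1) that by blast
    then show ?thesis unfolding g_def by (rule someI_ex)
  qed
  have injg: "inj_on g B" by (rule inj_onI) (metis g)
  have cimg: "?c ` (g ` B) = B"
  proof
    show "?c ` (g ` B) \<subseteq> B" using g by auto
    show "B \<subseteq> ?c ` (g ` B)"
    proof
      fix b assume "b \<in> B"
      then have "b = ?c (g b)" using g by simp
      then show "b \<in> ?c ` (g ` B)" using \<open>b \<in> B\<close> by blast
    qed
  qed
  have injc: "inj_on ?c (g ` B)" using g by (auto simp: inj_on_def)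
  have m: "mindep H (g ` B)" unfolding mindep_def using injc cimg B(2) by simp
  have s: "g ` B \<subseteq> \<sigma>" using g by blast
  have c: "card (g ` B) = vec.dim (?c ` \<sigma>)" using B(4) injg by (simp add: card_image)
  show "vec.dim (?c ` \<sigma>) \<in> {card \<tau> |\<tau>. \<tau> \<subseteq> \<sigma> \<and> mindep H \<tau>}"
    using m s c[symmetric] by blast
qed

lemma nullity_dim:
  fixes H :: "'a::field ^ 'n::finite ^ 'm"
  shows "nullity H \<sigma> = vec.dim {c \<in> Vs \<sigma>. H *v c = 0}"
proof -
  have "card \<sigma> = vec.dim (Vs \<sigma> :: ('a ^ 'n) set)" by (simp add: Vs_def dim_substandard_cart)
  also have "\<dots> = vec.dim {c \<in> Vs \<sigma>. H *v c = 0} + mrank H \<sigma>"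
    using rank_nullity_vec[where V="Vs \<sigma>" and H=H] Vs_subspace[of \<sigma>] by (simp add: img_span mrank_dim)
  finally show ?thesis unfolding nullity_def by simp
qed



lemma Supp_le: "Supp X \<subseteq> \<sigma> \<longleftrightarrow> X \<subseteq> Vs \<sigma>"
  by (auto simp: Supp_def Vs_def)

lemma Vs_mono: "A \<subseteq> B \<Longrightarrow> Vs A \<subseteq> Vs B"
  by (auto simp: Vs_def)

lemma in_Vs_Supp: "X \<subseteq> Vs (Supp X)"
  by (auto simp: Supp_def Vs_def)

lemma mono_supp:
  fixes C :: "('a::{field,finite} ^ 'n::finite) set"
  assumes cw: "constant_weight C"
    and D: "vec.subspace D" and D': "vec.subspace D'" and DD': "D \<subseteq> D'" "D \<noteq> D'" and D'C: "D' \<subseteq> C"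
  shows "card (Supp D) < card (Supp D')"
proof -
  let ?q = "CARD('a)"
  obtain d0 where d0: "d0 \<in> D'" "d0 \<notin> D" using DD' by blast
  have z: "0 \<in> D" using D by (simp add: vec.subspace_0)
  have d00: "d0 \<noteq> 0" using d0 z by blast
  define w where "w = wt d0"
  have hD': "\<And>d. d \<in> D' \<Longrightarrow> d \<noteq> 0 \<Longrightarrow> wt d = w"
    using cw D'C d0 d00 unfolding constant_weight_def w_def by blast
  have hD: "\<And>d. d \<in> D \<Longrightarrow> d \<noteq> 0 \<Longrightarrow> wt d = w" using hD' DD' by blast
  have F1: "?q * ((card D - 1) * w) = card (Supp D) * ((?q - 1) * card D)"
    by (rule wt_sum_formula[OF D hD])
  have F2: "?q * ((card D' - 1) * w) = card (Supp D') * ((?q - 1) * card D')"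
    by (rule wt_sum_formula[OF D' hD'])
  have mm: "card D < card D'" using DD' by (intro psubset_card_mono) auto
  have m1: "card D \<ge> 1" using z by (auto simp: Suc_le_eq card_gt_0_iff)
  have wpos: "w > 0"
  proof -
    obtain j where "d0 $ j \<noteq> 0" using d00 by (auto simp: vec_eq_iff)
    then have "{x. d0 $ x \<noteq> 0} \<noteq> {}" by blast
    then show ?thesis by (simp add: w_def wt_def card_gt_0_iff)
  qed
  have q2: "?q \<ge> 2"
  proof -
    have "card {0::'a, 1} \<le> ?q" by (rule card_mono) auto
    then show ?thesis by simp
  qed
  have ss: "card (Supp D) \<le> card (Supp D')"
    using DD' by (intro card_mono) (auto simp: Supp_def)
  show ?thesis
  proof (rule ccontr)
    assume "\<not> ?thesis"
    then have seq: "card (Supp D) = card (Supp D')" using ss by simp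
    define s where "s = card (Supp D)"
    define m where "m = card D"
    define m' where "m' = card D'"
    have E1: "?q * ((m - 1) * w) = s * ((?q - 1) * m)" using F1 by (simp add: s_def m_def)
    have E2: "?q * ((m' - 1) * w) = s * ((?q - 1) * m')" using F2 seq by (simp add: s_def m'_def)
    have X1: "(?q * w) * ((m - 1) * m') = (s * (?q - 1)) * (m * m')"
    proof -
      have "(?q * w) * ((m - 1) * m') = (?q * ((m - 1) * w)) * m'" by (simp add: ac_simps)
      also have "\<dots> = (s * ((?q - 1) * m)) * m'" by (simp only: E1)
      also have "\<dots> = (s * (?q - 1)) * (m * m')" by (simp add: ac_simps)
      finally show ?thesis .
    qed
    have X2: "(?q * w) * ((m' - 1) * m) = (s * (?q - 1)) * (m * m')"
    proof -
      have "(?q * w) * ((m' - 1) * m) = (?q * ((m' - 1) * w)) * m" by (simp add: ac_simps)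
      also have "\<dots> = (s * ((?q - 1) * m')) * m" by (simp only: E2)
      also have "\<dots> = (s * (?q - 1)) * (m * m')" by (simp add: ac_simps)
      finally show ?thesis .
    qed
    have qw0: "?q * w \<noteq> 0" using wpos q2 by simp
    have "(?q * w) * ((m - 1) * m') = (?q * w) * ((m' - 1) * m)" using X1 X2 by (simp only:)
    then have "(m - 1) * m' = (m' - 1) * m" using mult_left_cancel[OF qw0] by blast
    then have "m * m' - m' = m' * m - m" by (simp add: diff_mult_distrib)
    then have e3: "m * m' - m' = m * m' - m" by (simp only: mult.commute)
    have l1: "m' \<le> m * m'" using m1 by (simp add: m_def)
    have l2: "m \<le> m * m'" using m1 mm by (simp add: m_def m'_def)
    have "m = m'" using e3 l1 l2 by linarith
    then show False using mm by (simp add: m_def m'_def)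
  qed
qed

theorem proposition3:
  fixes C :: "('a::{field,finite} ^ 'n) set"
    and H :: "'a ^ 'n ^ 'm"
    and k i :: nat
  assumes "vec.subspace C"
    and "vec.dim C = k"
    and "constant_weight C"
    and "\<And>c. c \<in> C \<longleftrightarrow> H *v c = 0"
    and "i \<le> k"
  shows "N H i = {Supp D | D. vec.subspace D \<and> D \<subseteq> C \<and> vec.dim D = i}"
proof -
  note Csub = assms(1) and cw = assms(3) and HC = assms(4)
  define KK where "KK \<sigma> = C \<inter> Vs \<sigma>" for \<sigma>
  have KKsub: "vec.subspace (KK \<sigma>)" for \<sigma>
    unfolding KK_def by (rule vec.subspace_inter[OF Csub Vs_subspace])
  have nul: "nullity H \<sigma> = vec.dim (KK \<sigma>)" for \<sigma>
  proof -
    have "{c \<in> Vs \<sigma>. H *v c = 0} = KK \<sigma>" using HC by (auto simp: KK_def)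
    then show ?thesis by (simp add: nullity_dim)
  qed
  show ?thesis
  proof
    show "N H i \<subseteq> {Supp D | D. vec.subspace D \<and> D \<subseteq> C \<and> vec.dim D = i}"
    proof
      fix \<sigma> assume s: "\<sigma> \<in> N H i"
      then have ni: "nullity H \<sigma> = i" and mn: "\<And>\<tau>. \<tau> \<subset> \<sigma> \<Longrightarrow> nullity H \<tau> \<noteq> i"
        by (auto simp: N_def)
      let ?D = "KK \<sigma>"
      have sD: "Supp ?D \<subseteq> \<sigma>" unfolding Supp_le KK_def by blast
      have eqK: "KK (Supp ?D) = ?D"
      proof
        show "KK (Supp ?D) \<subseteq> ?D" using Vs_mono[OF sD] unfolding KK_def by blast
        show "?D \<subseteq> KK (Supp ?D)" using in_Vs_Supp[of ?D] by (auto simp: KK_def)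
      qed
      have "Supp ?D = \<sigma>"
      proof (rule ccontr)
        assume "Supp ?D \<noteq> \<sigma>"
        then have "Supp ?D \<subset> \<sigma>" using sD by blast
        moreover have "nullity H (Supp ?D) = i" using ni by (simp add: nul eqK)
        ultimately show False using mn by blast
      qed
      moreover have "vec.dim ?D = i" using ni by (simp add: nul)
      moreover have "?D \<subseteq> C" by (auto simp: KK_def)
      ultimately show "\<sigma> \<in> {Supp D | D. vec.subspace D \<and> D \<subseteq> C \<and> vec.dim D = i}"
        using KKsub[of \<sigma>] by blast
    qed
    show "{Supp D | D. vec.subspace D \<and> D \<subseteq> C \<and> vec.dim D = i} \<subseteq> N H i"
    proof
      fix \<sigma> assume "\<sigma> \<in> {Supp D | D. vec.subspace D \<and> D \<subseteq> C \<and> vec.dim D = i}"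
      then obtain D where D: "vec.subspace D" "D \<subseteq> C" "vec.dim D = i" and sig: "\<sigma> = Supp D" by blast
      have DK: "D \<subseteq> KK \<sigma>" using D(2) in_Vs_Supp[of D] sig by (auto simp: KK_def)
      have KeqD: "KK \<sigma> = D"
      proof (rule ccontr)
        assume ne: "KK \<sigma> \<noteq> D"
        have "card (Supp D) < card (Supp (KK \<sigma>))"
          by (rule mono_supp[OF cw D(1) KKsub DK]) (use ne in \<open>auto simp: KK_def\<close>)
        moreover have "Supp (KK \<sigma>) \<subseteq> Supp D" unfolding Supp_le sig[symmetric] KK_def by blast
        ultimately show False by (simp add: card_mono leD)
      qed
      have "nullity H \<sigma> = i" using D(3) by (simp add: nul KeqD)
      moreover have "nullity H \<tau> \<noteq> i" if tau: "\<tau> \<subset> \<sigma>" for \<tau>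
      proof
        assume "nullity H \<tau> = i"
        then have dK: "vec.dim (KK \<tau>) = i" by (simp add: nul)
        define E where "E = vec.span (D \<union> KK \<tau>)"
        have Esub: "vec.subspace E" by (simp add: E_def)
        have EC: "E \<subseteq> C" unfolding E_def using D(2) Csub by (intro vec.span_minimal) (auto simp: KK_def)
        have KKs: "KK \<tau> \<subseteq> Vs \<sigma>" using tau by (auto simp: KK_def Vs_def)
        have EV: "E \<subseteq> Vs \<sigma>" unfolding E_def
          using in_Vs_Supp[of D] sig KKs by (intro vec.span_minimal Vs_subspace) auto
        have DE: "D \<subseteq> E" unfolding E_def by (meson Un_upper1 order_trans vec.span_superset)
        have ED: "E = D"
        proof (rule ccontr)
          assume ne: "E \<noteq> D"
          have "card (Supp D) < card (Supp E)"
            by (rule mono_supp[OF cw D(1) Esub DE]) (use ne EC in auto)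
          moreover have "Supp E \<subseteq> Supp D" using EV sig Supp_le by blast
          ultimately show False by (simp add: card_mono leD)
        qed
        have "KK \<tau> \<subseteq> D" using ED unfolding E_def by (metis Un_upper2 order_trans vec.span_superset)
        then have "KK \<tau> = D" using dK D(3) by (intro vec.subspace_dim_equal KKsub D(1)) auto
        then have "Supp D \<subseteq> \<tau>" unfolding Supp_le KK_def by blast
        then show False using tau sig by blast
      qed
      ultimately show "\<sigma> \<in> N H i" by (auto simp: N_def)
    qed
  qed
qed


end
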